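(* Let $\Gamma,\Delta$ be finite multisets of formulas with $\vdash_{\mathsf{GT}}\Gamma\Rightarrow\Delta$. Then for every pair of partitions $\Gamma=\Gamma_1,\Gamma_2$ and $\Delta=\Lambda_1,\Delta_2$ (as multiset unions) such that $\Lambda_1$ consists of classical formulas, there is a sequent interpolant $\phi$ of the partition sequent $\Gamma_1;\Gamma_2\Rightarrow\Lambda_1;\Delta_2$; moreover, if $\Delta_2$ consists of classical formulas, then $\phi$ can be taken to be classical.
   Context: Fix a countably infinite set $\mathsf{Prop}$ of propositional variables. Classical formulas are generated by $\alpha ::= p \mid \bot \mid \neg\alpha \mid \alpha\wedge\alpha \mid \alpha\vee\alpha$ with $p\in\mathsf{Prop}$. Formulas are generated by $\phi ::= \alpha \mid \phi\wedge\phi \mid \phi\vee\phi \mid \phi\mathbin{\backslash\!\!/}\phi$ where $\alpha$ is classical ($\vee$: split disjunction, $\mathbin{\backslash\!\!/}$: inquisitive disjunction). A sequent is $\Gamma\Rightarrow\Delta$ with $\Gamma,\Delta$ finite multisets of formulas; "$\Gamma,\Delta$" is multiset union. Polarity: an occurrence of a propositional variable in $\phi$ is positive (negative) if it lies in the scope of an even (odd) number of negations. $\mathsf{P}^+(\phi)$ ($\mathsf{P}^-(\phi)$) is the set of variables having a positive (negative) occurrence in $\phi$, and $\mathsf{P}^i(\Gamma)=\bigcup_{\phi\in\Gamma}\mathsf{P}^i(\phi)$. A partition sequent $\Gamma_1;\Gamma_2\Rightarrow\Delta_1;\Delta_2$ is an expression such that $\Gamma_1,\Gamma_2\Rightarrow\Delta_1,\Delta_2$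 is a sequent. A formula $\phi$ is a sequent interpolant of it if (i) $\vdash_{\mathsf{GT}^-}\Gamma_1\Rightarrow\Delta_1,\phi$ and $\vdash_{\mathsf{GT}^-}\Gamma_2,\phi\Rightarrow\Delta_2$; and (ii) $\mathsf{P}^i(\phi)\subseteq(\mathsf{P}^i(\Gamma_1)\cup\mathsf{P}^j(\Delta_1))\cap(\mathsf{P}^j(\Gamma_2)\cup\mathsf{P}^i(\Delta_2))$ for $i\in\{+,-\}$ and $j$ the other element of $\{+,-\}$. Deep-inference notation: for a formula $\chi$ with a designated occurrence of a subformula not in the scope of any negation, $\chi\{\eta\}$ denotes the result of replacing that occurrence by $\eta$. The calculus $\mathsf{GT}$ ($\alpha$ ranges over classical formulas, $\Lambda$ over multisets of classical formulas): axioms $\Gamma,p\Rightarrow p,\Delta$ and $\Gamma,\bot\Rightarrow\Delta$; (L$\neg$) from $\Gamma\Rightarrow\alpha,\Delta$ infer $\Gamma,\neg\alpha\Rightarrow\Delta$; (R$\neg$) from $\Gamma,\alpha\Rightarrow\Delta$ infer $\Gamma\Rightarrow\neg\alpha,\Delta$; (L$\wedge$) from $\Gamma,\phi,\psi\Rightarrow\Delta$ infer $\Gamma,\phi\wedge\psi\Rightarrow\Delta$; (R$\wedge$) from $\Gamma\Rightarrow\phi,\Lambda$ and $\Gamma\Rightarrow\psi,\Lambda$ infer $\Gamma\Rightarrow\phi\wedge\psi,\Lambda,\Delta$; (L$\vee$) from $\Gamma,\phi\Rightarrow\Lambda$ and $\Gamma,\psi\Rightarrow\Lambda$ infer $\Gamma,\phi\vee\psi\Rightarrow\Lambda,\Delta$;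 (R$\vee$) from $\Gamma\Rightarrow\phi,\psi,\Delta$ infer $\Gamma\Rightarrow\phi\vee\psi,\Delta$; (L$\mathbin{\backslash\!\!/}$) from $\Gamma,\chi\{\phi_L\}\Rightarrow\Delta$ and $\Gamma,\chi\{\phi_R\}\Rightarrow\Delta$ infer $\Gamma,\chi\{\phi_L\mathbin{\backslash\!\!/}\phi_R\}\Rightarrow\Delta$; (R$\mathbin{\backslash\!\!/}$) from $\Gamma\Rightarrow\chi\{\phi_i\},\Delta$ ($i\in\{L,R\}$) infer $\Gamma\Rightarrow\chi\{\phi_L\mathbin{\backslash\!\!/}\phi_R\},\Delta$; (Cut) from $\Gamma\Rightarrow\phi,\Delta$ and $\Pi,\phi\Rightarrow\Sigma$ infer $\Pi,\Gamma\Rightarrow\Delta,\Sigma$. $\mathsf{GT}^-$ is $\mathsf{GT}$ without (Cut). *)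

theory Defs
  imports Main "HOL-Library.Multiset"
begin

datatype fm =
    Var nat
  | Bot
  | Neg fm
  | Conj fm fm
  | Disj fm fm       (* split disjunction \<or> *)
  | IDisj fm fm      (* inquisitive disjunction *)

fun classical :: "fm \<Rightarrow> bool" where
  "classical (Var p) = True"
| "classical Bot = True"
| "classical (Neg a) = classical a"
| "classical (Conj a b) = (classical a \<and> classical b)"
| "classical (Disj a b) = (classical a \<and> classical b)"
| "classical (IDisj a b) = False"

fun wff :: "fm \<Rightarrow> bool" where
  "wff (Var p) = True"
| "wff Bot = True"
| "wff (Neg a) = classical a"
| "wff (Conj a b) = (wff a \<and> wff b)"
| "wff (Disj a b) = (wff a \<and> wff b)"
| "wff (IDisj a b) = (wff a \<and> wff b)"

(* polarity: pvars True = P^+, pvars False = P^- *)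
fun pvars :: "bool \<Rightarrow> fm \<Rightarrow> nat set" where
  "pvars b (Var p) = (if b then {p} else {})"
| "pvars b Bot = {}"
| "pvars b (Neg a) = pvars (\<not> b) a"
| "pvars b (Conj x y) = pvars b x \<union> pvars b y"
| "pvars b (Disj x y) = pvars b x \<union> pvars b y"
| "pvars b (IDisj x y) = pvars b x \<union> pvars b y"

definition mpvars :: "bool \<Rightarrow> fm multiset \<Rightarrow> nat set" where
  "mpvars b \<Gamma> = (\<Union>\<phi>\<in>set_mset \<Gamma>. pvars b \<phi>)"

(* deep-inference contexts: a hole not in the scope of any negation *)
datatype ctx =
    Hole
  | CConjL ctx fm | CConjR fm ctx
  | CDisjL ctx fm | CDisjR fm ctx
  | CIDisjL ctx fm | CIDisjR fm ctx

fun fill :: "ctx \<Rightarrow> fm \<Rightarrow> fm" where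
  "fill Hole e = e"
| "fill (CConjL c x) e = Conj (fill c e) x"
| "fill (CConjR x c) e = Conj x (fill c e)"
| "fill (CDisjL c x) e = Disj (fill c e) x"
| "fill (CDisjR x c) e = Disj x (fill c e)"
| "fill (CIDisjL c x) e = IDisj (fill c e) x"
| "fill (CIDisjR x c) e = IDisj x (fill c e)"

definition wffs :: "fm multiset \<Rightarrow> bool" where
  "wffs M = (\<forall>\<phi>\<in>#M. wff \<phi>)"

definition classicals :: "fm multiset \<Rightarrow> bool" where
  "classicals M = (\<forall>\<phi>\<in>#M. classical \<phi>)"

(* The calculus GT.  gt True = GT (with Cut), gt False = GT^- (cut-free).
   Sequents consist of well-formed formulas; side formulas that are
   introduced by a rule are required to be well-formed. *)
inductive gt :: "bool \<Rightarrow> fm multiset \<Rightarrow> fm multiset \<Rightarrow> bool" where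
  ax: "wffs \<Gamma> \<Longrightarrow> wffs \<Delta> \<Longrightarrow> gt c (\<Gamma> + {#Var p#}) ({#Var p#} + \<Delta>)"
| axBot: "wffs \<Gamma> \<Longrightarrow> wffs \<Delta> \<Longrightarrow> gt c (\<Gamma> + {#Bot#}) \<Delta>"
| LNeg: "classical \<alpha> \<Longrightarrow> gt c \<Gamma> ({#\<alpha>#} + \<Delta>) \<Longrightarrow> gt c (\<Gamma> + {#Neg \<alpha>#}) \<Delta>"
| RNeg: "classical \<alpha> \<Longrightarrow> gt c (\<Gamma> + {#\<alpha>#}) \<Delta> \<Longrightarrow> gt c \<Gamma> ({#Neg \<alpha>#} + \<Delta>)"
| LConj: "gt c (\<Gamma> + {#\<phi>, \<psi>#}) \<Delta> \<Longrightarrow> gt c (\<Gamma> + {#Conj \<phi> \<psi>#}) \<Delta>"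
| RConj: "classicals \<Lambda> \<Longrightarrow> wffs \<Delta> \<Longrightarrow> gt c \<Gamma> ({#\<phi>#} + \<Lambda>) \<Longrightarrow> gt c \<Gamma> ({#\<psi>#} + \<Lambda>)
          \<Longrightarrow> gt c \<Gamma> ({#Conj \<phi> \<psi>#} + \<Lambda> + \<Delta>)"
| LDisj: "classicals \<Lambda> \<Longrightarrow> wffs \<Delta> \<Longrightarrow> gt c (\<Gamma> + {#\<phi>#}) \<Lambda> \<Longrightarrow> gt c (\<Gamma> + {#\<psi>#}) \<Lambda>
          \<Longrightarrow> gt c (\<Gamma> + {#Disj \<phi> \<psi>#}) (\<Lambda> + \<Delta>)"
| RDisj: "gt c \<Gamma> ({#\<phi>, \<psi>#} + \<Delta>) \<Longrightarrow> gt c \<Gamma> ({#Disj \<phi> \<psi>#} + \<Delta>)"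
| LIDisj: "gt c (\<Gamma> + {#fill \<chi> \<phi>L#}) \<Delta> \<Longrightarrow> gt c (\<Gamma> + {#fill \<chi> \<phi>R#}) \<Delta>
          \<Longrightarrow> gt c (\<Gamma> + {#fill \<chi> (IDisj \<phi>L \<phi>R)#}) \<Delta>"
| RIDisjL: "wff \<phi>R \<Longrightarrow> gt c \<Gamma> ({#fill \<chi> \<phi>L#} + \<Delta>)
          \<Longrightarrow> gt c \<Gamma> ({#fill \<chi> (IDisj \<phi>L \<phi>R)#} + \<Delta>)"
| RIDisjR: "wff \<phi>L \<Longrightarrow> gt c \<Gamma> ({#fill \<chi> \<phi>R#} + \<Delta>)
          \<Longrightarrow> gt c \<Gamma> ({#fill \<chi> (IDisj \<phi>L \<phi>R)#} + \<Delta>)"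
| Cut: "c \<Longrightarrow> gt c \<Gamma> ({#\<phi>#} + \<Delta>) \<Longrightarrow> gt c (\<Pi> + {#\<phi>#}) \<Sigma>
          \<Longrightarrow> gt c (\<Pi> + \<Gamma>) (\<Delta> + \<Sigma>)"

abbreviation GT :: "fm multiset \<Rightarrow> fm multiset \<Rightarrow> bool" where
  "GT \<equiv> gt True"

abbreviation GTminus :: "fm multiset \<Rightarrow> fm multiset \<Rightarrow> bool" where
  "GTminus \<equiv> gt False"

definition seq_interpolant ::
  "fm multiset \<Rightarrow> fm multiset \<Rightarrow> fm multiset \<Rightarrow> fm multiset \<Rightarrow> fm \<Rightarrow> bool" where
  "seq_interpolant G1 G2 D1 D2 \<phi> \<longleftrightarrow>
     wff \<phi> \<and>
     GTminus G1 (D1 + {#\<phi>#}) \<and> GTminus (G2 + {#\<phi>#}) D2 \<and>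
     (\<forall>i. pvars i \<phi> \<subseteq> (mpvars i G1 \<union> mpvars (\<not> i) D1) \<inter> (mpvars (\<not> i) G2 \<union> mpvars i D2))"

end

theory Submission
  imports Defs
begin

fun ev :: "(nat \<Rightarrow> bool) \<Rightarrow> fm \<Rightarrow> bool" where
  "ev v (Var p) = v p"
| "ev v Bot = False"
| "ev v (Neg a) = (\<not> ev v a)"
| "ev v (Conj a b) = (ev v a \<and> ev v b)"
| "ev v (Disj a b) = (ev v a \<or> ev v b)"
| "ev v (IDisj a b) = (ev v a \<or> ev v b)"

fun R :: "fm \<Rightarrow> fm set" where
  "R (Var p) = {Var p}"
| "R Bot = {Bot}"
| "R (Neg a) = {Neg a}"
| "R (Conj a b) = {Conj x y | x y. x \<in> R a \<and> y \<in> R b}"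
| "R (Disj a b) = {Disj x y | x y. x \<in> R a \<and> y \<in> R b}"
| "R (IDisj a b) = R a \<union> R b"

lemma R_ne: "\<exists>x. x \<in> R f"
  by (induction f) auto

lemma R_classical: "wff f \<Longrightarrow> x \<in> R f \<Longrightarrow> classical x"
  by (induction f arbitrary: x) auto

lemma classical_R: "classical f \<Longrightarrow> R f = {f}"
  by (induction f) auto

lemma R_pvars: "x \<in> R f \<Longrightarrow> pvars i x \<subseteq> pvars i f"
proof (induction f arbitrary: x i)
  case (Conj f1 f2)
  then obtain y z where "x = Conj y z" "y \<in> R f1" "z \<in> R f2" by auto
  then show ?case using Conj.IH by fastforce
next
  case (Disj f1 f2)
  then obtain y z where "x = Disj y z" "y \<in> R f1" "z \<in> R f2" by auto
  then show ?case using Disj.IH by fastforce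
next
  case (IDisj f1 f2)
  then have "x \<in> R f1 \<or> x \<in> R f2" by simp
  then show ?case using IDisj.IH by (simp; meson le_supI1 le_supI2)
qed auto

lemma classical_wff: "classical f \<Longrightarrow> wff f"
  by (induction f) auto

lemma ev_mono: "(\<forall>p\<in>pvars True f. v p \<longrightarrow> u p) \<Longrightarrow> (\<forall>p\<in>pvars False f. u p \<longrightarrow> v p) \<Longrightarrow> ev v f \<Longrightarrow> ev u f"
proof (induction f arbitrary: v u)
  case (Neg f)
  then show ?case by (metis ev.simps(3) pvars.simps(3))
next
  case (Conj f1 f2) then show ?case by (metis UnCI ev.simps(4) pvars.simps(4))
next
  case (Disj f1 f2) then show ?case by (metis UnCI ev.simps(5) pvars.simps(5))
next
  case (IDisj f1 f2) then show ?case by (metis UnCI ev.simps(6) pvars.simps(6))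
qed auto

lemma finite_pvars: "finite (pvars b f)"
  by (induction f arbitrary: b) auto

lemma finite_mpvars: "finite (mpvars b M)"
  by (simp add: mpvars_def finite_pvars)

lemma mpvars_simps[simp]: "mpvars b {#} = {}" "mpvars b (add_mset x M) = pvars b x \<union> mpvars b M"
  "mpvars b (M + N) = mpvars b M \<union> mpvars b N"
  by (auto simp: mpvars_def)

lemma wffs_simps[simp]: "wffs {#}" "wffs (add_mset x M) = (wff x \<and> wffs M)" "wffs (M + N) = (wffs M \<and> wffs N)"
  by (auto simp: wffs_def)

lemma classicals_simps[simp]: "classicals {#}" "classicals (add_mset x M) = (classical x \<and> classicals M)"
  "classicals (M + N) = (classicals M \<and> classicals N)"
  by (auto simp: classicals_def)

lemma classicals_wffs: "classicals M \<Longrightarrow> wffs M"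
  by (auto simp: classicals_def wffs_def classical_wff)

abbreviation rs :: "fm multiset \<Rightarrow> fm multiset \<Rightarrow> bool" where
  "rs \<equiv> rel_mset (\<lambda>g a. a \<in> R g)"

lemma rs_add: "rs (add_mset x M) N \<longleftrightarrow> (\<exists>a N'. N = add_mset a N' \<and> a \<in> R x \<and> rs M N')"
  by (metis msed_rel_invL rel_mset_Plus)

lemma rs_plus: "rs (M1 + M2) N \<longleftrightarrow> (\<exists>N1 N2. N = N1 + N2 \<and> rs M1 N1 \<and> rs M2 N2)"
proof (induction M2 arbitrary: N)
  case empty
  then show ?case by auto
next
  case (add x M2)
  show ?case
    apply (simp only: union_mset_add_mset_right rs_add add.IH)
    apply (auto simp: rs_add)
     apply (metis union_mset_add_mset_right)
    by (metis union_mset_add_mset_right)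
qed

lemma rs_ex: "\<exists>N. rs M N"
proof (induction M)
  case empty
  then show ?case by auto
next
  case (add x M)
  then show ?case using R_ne rs_add by metis
qed

lemma rs_classicals: "classicals M \<Longrightarrow> rs M N \<longleftrightarrow> N = M"
proof (induction M arbitrary: N)
  case empty
  then show ?case by auto
next
  case (add x M)
  then show ?case by (auto simp: rs_add classical_R)
qed

lemma rs_props: "rs M N \<Longrightarrow> wffs M \<Longrightarrow> classicals N \<and> mpvars b N \<subseteq> mpvars b M"
proof (induction M arbitrary: N)
  case empty
  then show ?case by auto
next
  case (add x M)
  then show ?case using R_classical R_pvars by (fastforce simp: rs_add)
qed

definition valid :: "fm multiset \<Rightarrow> fm multiset \<Rightarrow> bool" where
  "valid \<Gamma> \<Delta> \<longleftrightarrow> (\<forall>A. rs \<Gamma> A \<longrightarrow> (\<exists>B. rs \<Delta> B \<and> (\<forall>v. (\<forall>a\<in>#A. ev v a) \<longrightarrow> (\<exists>b\<in>#B. ev v b))))"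

lemma R_fill: "R (fill c (IDisj a b)) = R (fill c a) \<union> R (fill c b)"
  by (induction c) auto

lemma validI:
  assumes "\<And>A. rs G A \<Longrightarrow> \<exists>B. rs D B \<and> (\<forall>v. (\<forall>a\<in>#A. ev v a) \<longrightarrow> (\<exists>b\<in>#B. ev v b))"
  shows "valid G D"
  using assms unfolding valid_def by blast

lemma validD:
  assumes "valid G D" "rs G A"
  obtains B where "rs D B" "\<And>v. (\<forall>a\<in>#A. ev v a) \<Longrightarrow> (\<exists>b\<in>#B. ev v b)"
  using assms unfolding valid_def by blast

lemma soundness: "gt c G D \<Longrightarrow> valid G D"
proof (induction rule: gt.induct)
  case (ax \<Gamma> \<Delta> c p)
  show ?case
  proof (rule validI)
    fix A assume "rs (\<Gamma> + {#Var p#}) A"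
    then obtain A' where A: "A = add_mset (Var p) A'" by (auto simp: rs_add)
    obtain D where "rs \<Delta> D" using rs_ex by blast
    then have "rs ({#Var p#} + \<Delta>) (add_mset (Var p) D)" by (auto simp: rs_add)
    then show "\<exists>B. rs ({#Var p#} + \<Delta>) B \<and> (\<forall>v. (\<forall>a\<in>#A. ev v a) \<longrightarrow> (\<exists>b\<in>#B. ev v b))"
      using A by fastforce
  qed
next
  case (axBot \<Gamma> \<Delta> c)
  show ?case
  proof (rule validI)
    fix A assume "rs (\<Gamma> + {#Bot#}) A"
    then obtain A' where A: "A = add_mset Bot A'" by (auto simp: rs_add)
    obtain D where "rs \<Delta> D" using rs_ex by blast
    then show "\<exists>B. rs \<Delta> B \<and> (\<forall>v. (\<forall>a\<in>#A. ev v a) \<longrightarrow> (\<exists>b\<in>#B. ev v b))"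
      using A by fastforce
  qed
next
  case (LNeg \<alpha> c \<Gamma> \<Delta>)
  show ?case
  proof (rule validI)
    fix A assume "rs (\<Gamma> + {#Neg \<alpha>#}) A"
    then obtain A' where A: "A = add_mset (Neg \<alpha>) A'" "rs \<Gamma> A'" by (auto simp: rs_add)
    obtain B0 where B0: "rs ({#\<alpha>#} + \<Delta>) B0" "\<And>v. (\<forall>a\<in>#A'. ev v a) \<Longrightarrow> (\<exists>b\<in>#B0. ev v b)"
      using validD[OF LNeg.IH A(2)] by blast
    then obtain B where B: "B0 = add_mset \<alpha> B" "rs \<Delta> B" using classical_R[OF LNeg.hyps(1)] by (auto simp: rs_add)
    show "\<exists>B. rs \<Delta> B \<and> (\<forall>v. (\<forall>a\<in>#A. ev v a) \<longrightarrow> (\<exists>b\<in>#B. ev v b))"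
      using A B B0 by (intro exI[of _ B]) fastforce
  qed
next
  case (RNeg \<alpha> c \<Gamma> \<Delta>)
  show ?case
  proof (rule validI)
    fix A assume A: "rs \<Gamma> A"
    then have "rs (\<Gamma> + {#\<alpha>#}) (add_mset \<alpha> A)" using classical_R[OF RNeg.hyps(1)] by (auto simp: rs_add)
    then obtain B where B: "rs \<Delta> B" "\<And>v. (\<forall>a\<in>#add_mset \<alpha> A. ev v a) \<Longrightarrow> (\<exists>b\<in>#B. ev v b)"
      using validD[OF RNeg.IH] by blast
    have "rs ({#Neg \<alpha>#} + \<Delta>) (add_mset (Neg \<alpha>) B)" using B(1) by (auto simp: rs_add)
    then show "\<exists>B. rs ({#Neg \<alpha>#} + \<Delta>) B \<and> (\<forall>v. (\<forall>a\<in>#A. ev v a) \<longrightarrow> (\<exists>b\<in>#B. ev v b))"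
      using B(2) by (intro exI[of _ "add_mset (Neg \<alpha>) B"]) fastforce
  qed
next
  case (LConj c \<Gamma> \<phi> \<psi> \<Delta>)
  show ?case
  proof (rule validI)
    fix A assume "rs (\<Gamma> + {#Conj \<phi> \<psi>#}) A"
    then obtain a b A' where A: "A = add_mset (Conj a b) A'" "rs \<Gamma> A'" "a \<in> R \<phi>" "b \<in> R \<psi>" by (auto simp: rs_add)
    then have "rs (\<Gamma> + {#\<phi>, \<psi>#}) (add_mset a (add_mset b A'))" by (auto simp: rs_add)
    then obtain B where B: "rs \<Delta> B" "\<And>v. (\<forall>x\<in>#add_mset a (add_mset b A'). ev v x) \<Longrightarrow> (\<exists>y\<in>#B. ev v y)"
      using validD[OF LConj.IH] by blast
    then show "\<exists>B. rs \<Delta> B \<and> (\<forall>v. (\<forall>a\<in>#A. ev v a) \<longrightarrow> (\<exists>b\<in>#B. ev v b))"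
      using A by (intro exI[of _ B]) auto
  qed
next
  case (RConj \<Lambda> \<Delta> c \<Gamma> \<phi> \<psi>)
  show ?case
  proof (rule validI)
    fix A assume A: "rs \<Gamma> A"
    obtain B1 where B1: "rs ({#\<phi>#} + \<Lambda>) B1" "\<And>v. (\<forall>x\<in>#A. ev v x) \<Longrightarrow> (\<exists>y\<in>#B1. ev v y)"
      using validD[OF RConj.IH(1) A] by blast
    obtain B2 where B2: "rs ({#\<psi>#} + \<Lambda>) B2" "\<And>v. (\<forall>x\<in>#A. ev v x) \<Longrightarrow> (\<exists>y\<in>#B2. ev v y)"
      using validD[OF RConj.IH(2) A] by blast
    obtain a where a: "B1 = add_mset a \<Lambda>" "a \<in> R \<phi>" using B1(1) rs_classicals[OF RConj.hyps(1)] by (auto simp: rs_add)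
    obtain b where b: "B2 = add_mset b \<Lambda>" "b \<in> R \<psi>" using B2(1) rs_classicals[OF RConj.hyps(1)] by (auto simp: rs_add)
    obtain D where D: "rs \<Delta> D" using rs_ex by blast
    have "rs ({#Conj \<phi> \<psi>#} + \<Lambda> + \<Delta>) (add_mset (Conj a b) \<Lambda> + D)"
      using a b D rs_classicals[OF RConj.hyps(1)] by (auto simp: rs_add rs_plus)
    moreover have "\<forall>v. (\<forall>x\<in>#A. ev v x) \<longrightarrow> (\<exists>y\<in>#add_mset (Conj a b) \<Lambda> + D. ev v y)"
      using B1(2) B2(2) a b by fastforce
    ultimately show "\<exists>B. rs ({#Conj \<phi> \<psi>#} + \<Lambda> + \<Delta>) B \<and> (\<forall>v. (\<forall>a\<in>#A. ev v a) \<longrightarrow> (\<exists>b\<in>#B. ev v b))"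
      by blast
  qed
next
  case (LDisj \<Lambda> \<Delta> c \<Gamma> \<phi> \<psi>)
  show ?case
  proof (rule validI)
    fix A assume "rs (\<Gamma> + {#Disj \<phi> \<psi>#}) A"
    then obtain a b A' where A: "A = add_mset (Disj a b) A'" "rs \<Gamma> A'" "a \<in> R \<phi>" "b \<in> R \<psi>" by (auto simp: rs_add)
    have "rs (\<Gamma> + {#\<phi>#}) (add_mset a A')" "rs (\<Gamma> + {#\<psi>#}) (add_mset b A')" using A by (auto simp: rs_add)
    then obtain B1 B2 where B1: "rs \<Lambda> B1" "\<And>v. (\<forall>x\<in>#add_mset a A'. ev v x) \<Longrightarrow> (\<exists>y\<in>#B1. ev v y)"
      and B2: "rs \<Lambda> B2" "\<And>v. (\<forall>x\<in>#add_mset b A'. ev v x) \<Longrightarrow> (\<exists>y\<in>#B2. ev v y)"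
      using validD[OF LDisj.IH(1)] validD[OF LDisj.IH(2)] by metis
    have e: "B1 = \<Lambda>" "B2 = \<Lambda>" using B1(1) B2(1) rs_classicals[OF LDisj.hyps(1)] by auto
    obtain D where D: "rs \<Delta> D" using rs_ex by blast
    have "rs (\<Lambda> + \<Delta>) (\<Lambda> + D)"
      using D rs_classicals[OF LDisj.hyps(1)] by (auto simp: rs_plus)
    moreover have "\<forall>v. (\<forall>x\<in>#A. ev v x) \<longrightarrow> (\<exists>y\<in>#\<Lambda> + D. ev v y)"
      using B1(2) B2(2) A e by fastforce
    ultimately show "\<exists>B. rs (\<Lambda> + \<Delta>) B \<and> (\<forall>v. (\<forall>a\<in>#A. ev v a) \<longrightarrow> (\<exists>b\<in>#B. ev v b))"
      by blast
  qed
next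
  case (RDisj c \<Gamma> \<phi> \<psi> \<Delta>)
  show ?case
  proof (rule validI)
    fix A assume A: "rs \<Gamma> A"
    obtain B0 where B0: "rs ({#\<phi>, \<psi>#} + \<Delta>) B0" "\<And>v. (\<forall>x\<in>#A. ev v x) \<Longrightarrow> (\<exists>y\<in>#B0. ev v y)"
      using validD[OF RDisj.IH A] by blast
    then obtain a b B where B: "B0 = add_mset a (add_mset b B)" "a \<in> R \<phi>" "b \<in> R \<psi>" "rs \<Delta> B"
      by (auto simp: rs_add)
    have "rs ({#Disj \<phi> \<psi>#} + \<Delta>) (add_mset (Disj a b) B)" using B by (auto simp: rs_add)
    moreover have "\<forall>v. (\<forall>x\<in>#A. ev v x) \<longrightarrow> (\<exists>y\<in>#add_mset (Disj a b) B. ev v y)"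
      using B0(2) B by fastforce
    ultimately show "\<exists>B. rs ({#Disj \<phi> \<psi>#} + \<Delta>) B \<and> (\<forall>v. (\<forall>a\<in>#A. ev v a) \<longrightarrow> (\<exists>b\<in>#B. ev v b))"
      by blast
  qed
next
  case (LIDisj c \<Gamma> \<chi> \<phi>L \<Delta> \<phi>R)
  show ?case
  proof (rule validI)
    fix A assume "rs (\<Gamma> + {#fill \<chi> (IDisj \<phi>L \<phi>R)#}) A"
    then obtain a A' where A: "A = add_mset a A'" "rs \<Gamma> A'" "a \<in> R (fill \<chi> \<phi>L) \<or> a \<in> R (fill \<chi> \<phi>R)"
      by (auto simp: rs_add R_fill)
    then have "rs (\<Gamma> + {#fill \<chi> \<phi>L#}) A \<or> rs (\<Gamma> + {#fill \<chi> \<phi>R#}) A" by (auto simp: rs_add)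
    then show "\<exists>B. rs \<Delta> B \<and> (\<forall>v. (\<forall>a\<in>#A. ev v a) \<longrightarrow> (\<exists>b\<in>#B. ev v b))"
      using validD[OF LIDisj.IH(1)] validD[OF LIDisj.IH(2)] by metis
  qed
next
  case (RIDisjL \<phi>R c \<Gamma> \<chi> \<phi>L \<Delta>)
  show ?case
  proof (rule validI)
    fix A assume A: "rs \<Gamma> A"
    obtain B0 where B0: "rs ({#fill \<chi> \<phi>L#} + \<Delta>) B0" "\<And>v. (\<forall>x\<in>#A. ev v x) \<Longrightarrow> (\<exists>y\<in>#B0. ev v y)"
      using validD[OF RIDisjL.IH A] by blast
    then have "rs ({#fill \<chi> (IDisj \<phi>L \<phi>R)#} + \<Delta>) B0" by (auto simp: rs_add R_fill)
    then show "\<exists>B. rs ({#fill \<chi> (IDisj \<phi>L \<phi>R)#} + \<Delta>) B \<and> (\<forall>v. (\<forall>a\<in>#A. ev v a) \<longrightarrow> (\<exists>b\<in>#B. ev v b))"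
      using B0(2) by blast
  qed
next
  case (RIDisjR \<phi>L c \<Gamma> \<chi> \<phi>R \<Delta>)
  show ?case
  proof (rule validI)
    fix A assume A: "rs \<Gamma> A"
    obtain B0 where B0: "rs ({#fill \<chi> \<phi>R#} + \<Delta>) B0" "\<And>v. (\<forall>x\<in>#A. ev v x) \<Longrightarrow> (\<exists>y\<in>#B0. ev v y)"
      using validD[OF RIDisjR.IH A] by blast
    then have "rs ({#fill \<chi> (IDisj \<phi>L \<phi>R)#} + \<Delta>) B0" by (auto simp: rs_add R_fill)
    then show "\<exists>B. rs ({#fill \<chi> (IDisj \<phi>L \<phi>R)#} + \<Delta>) B \<and> (\<forall>v. (\<forall>a\<in>#A. ev v a) \<longrightarrow> (\<exists>b\<in>#B. ev v b))"
      using B0(2) by blast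
  qed
next
  case (Cut c \<Gamma> \<phi> \<Delta> \<Pi> \<Sigma>)
  show ?case
  proof (rule validI)
    fix A assume "rs (\<Pi> + \<Gamma>) A"
    then obtain A1 A2 where A: "A = A1 + A2" "rs \<Pi> A1" "rs \<Gamma> A2" by (auto simp: rs_plus)
    obtain B0 where B0: "rs ({#\<phi>#} + \<Delta>) B0" "\<And>v. (\<forall>x\<in>#A2. ev v x) \<Longrightarrow> (\<exists>y\<in>#B0. ev v y)"
      using validD[OF Cut.IH(1) A(3)] by blast
    then obtain r BD where r: "B0 = add_mset r BD" "r \<in> R \<phi>" "rs \<Delta> BD" by (auto simp: rs_add)
    have "rs (\<Pi> + {#\<phi>#}) (add_mset r A1)" using r A by (auto simp: rs_add)
    then obtain BS where BS: "rs \<Sigma> BS" "\<And>v. (\<forall>x\<in>#add_mset r A1. ev v x) \<Longrightarrow> (\<exists>y\<in>#BS. ev v y)"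
      using validD[OF Cut.IH(2)] by blast
    have "rs (\<Delta> + \<Sigma>) (BD + BS)" using r BS by (auto simp: rs_plus)
    moreover have "\<forall>v. (\<forall>x\<in>#A. ev v x) \<longrightarrow> (\<exists>y\<in>#BD + BS. ev v y)"
      using B0(2) BS(2) r A by fastforce
    ultimately show "\<exists>B. rs (\<Delta> + \<Sigma>) B \<and> (\<forall>v. (\<forall>a\<in>#A. ev v a) \<longrightarrow> (\<exists>b\<in>#B. ev v b))"
      by blast
  qed
qed

definition msz :: "fm multiset \<Rightarrow> nat" where "msz M = (\<Sum>x\<in>#M. size x)"

lemma msz_simps[simp]: "msz {#} = 0" "msz (add_mset x M) = size x + msz M"
  by (auto simp: msz_def)

lemma ccomplete_aux:
  "msz G + msz D = n \<Longrightarrow> classicals G \<Longrightarrow> classicals D \<Longrightarrow>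
   (\<forall>v. (\<forall>a\<in>#G. ev v a) \<longrightarrow> (\<exists>b\<in>#D. ev v b)) \<Longrightarrow> gt False G D"
proof (induction n arbitrary: G D rule: less_induct)
  case (less n)
  note IH = less.IH[OF _ refl]
  have wG: "wffs G" and wD: "wffs D" using less.prems classicals_wffs by auto
  show ?case
  proof (cases "\<exists>a. Neg a \<in># G")
    case True
    then obtain a G' where G: "G = add_mset (Neg a) G'" by (metis multi_member_split)
    have "gt False G' ({#a#} + D)"
      using less.prems G by (intro IH) auto
    then have "gt False (G' + {#Neg a#}) D" using less.prems G by (intro gt.LNeg) auto
    then show ?thesis using G by simp
  next
    case noNegG: False
    show ?thesis
    proof (cases "\<exists>a b. Conj a b \<in># G")
      case True
      then obtain a b G' where G: "G = add_mset (Conj a b) G'" by (metis multi_member_split)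
      have "gt False (G' + {#a, b#}) D"
        using less.prems G by (intro IH) auto
      then have "gt False (G' + {#Conj a b#}) D" by (intro gt.LConj)
      then show ?thesis using G by simp
    next
      case noConjG: False
      show ?thesis
      proof (cases "\<exists>a b. Disj a b \<in># G")
        case True
        then obtain a b G' where G: "G = add_mset (Disj a b) G'" by (metis multi_member_split)
        have "gt False (G' + {#a#}) D" "gt False (G' + {#b#}) D"
          using less.prems G by (intro IH; auto)+
        then have "gt False (G' + {#Disj a b#}) (D + {#})" using less.prems by (intro gt.LDisj) auto
        then show ?thesis using G by simp
      next
        case noDisjG: False
        show ?thesis
        proof (cases "\<exists>a. Neg a \<in># D")
          case True
          then obtain a D' where D: "D = add_mset (Neg a) D'" by (metis multi_member_split)
          have "gt False (G + {#a#}) D'"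
            using less.prems D by (intro IH) auto
          then have "gt False G ({#Neg a#} + D')" using less.prems D by (intro gt.RNeg) auto
          then show ?thesis using D by simp
        next
          case noNegD: False
          show ?thesis
          proof (cases "\<exists>a b. Conj a b \<in># D")
            case True
            then obtain a b D' where D: "D = add_mset (Conj a b) D'" by (metis multi_member_split)
            have "gt False G ({#a#} + D')" "gt False G ({#b#} + D')"
              using less.prems D by (intro IH; auto)+
            then have "gt False G ({#Conj a b#} + D' + {#})" using less.prems D by (intro gt.RConj) auto
            then show ?thesis using D by simp
          next
            case noConjD: False
            show ?thesis
            proof (cases "\<exists>a b. Disj a b \<in># D")
              case True
              then obtain a b D' where D: "D = add_mset (Disj a b) D'" by (metis multi_member_split)
              have "gt False G ({#a, b#} + D')"
                using less.prems D by (intro IH) auto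
              then have "gt False G ({#Disj a b#} + D')" by (intro gt.RDisj)
              then show ?thesis using D by simp
            next
              case noDisjD: False
              have atG: "\<forall>x\<in>#G. x = Bot \<or> (\<exists>p. x = Var p)"
              proof
                fix x assume "x \<in># G"
                then show "x = Bot \<or> (\<exists>p. x = Var p)"
                  using noNegG noConjG noDisjG less.prems(2) by (cases x) (auto simp: classicals_def)
              qed
              have atD: "\<forall>x\<in>#D. x = Bot \<or> (\<exists>p. x = Var p)"
              proof
                fix x assume "x \<in># D"
                then show "x = Bot \<or> (\<exists>p. x = Var p)"
                  using noNegD noConjD noDisjD less.prems(3) by (cases x) (auto simp: classicals_def)
              qed
              show ?thesis
              proof (cases "Bot \<in># G")
                case True
                then obtain G' where G: "G = add_mset Bot G'" by (metis multi_member_split)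
                have "gt False (G' + {#Bot#}) D" using wG wD G by (intro gt.axBot) auto
                then show ?thesis using G by simp
              next
                case False
                define v where "v = (\<lambda>p. Var p \<in># G)"
                have "\<forall>a\<in>#G. ev v a" using atG False v_def by fastforce
                then obtain b where b: "b \<in># D" "ev v b" using less.prems(4) by blast
                then obtain p where p: "b = Var p" using atD by fastforce
                then have "Var p \<in># G" using b v_def by simp
                then obtain G' where G: "G = add_mset (Var p) G'" by (metis multi_member_split)
                obtain D' where D: "D = add_mset (Var p) D'" using b p by (metis multi_member_split)
                have "gt False (G' + {#Var p#}) ({#Var p#} + D')" using wG wD G D by (intro gt.ax) auto
                then show ?thesis using G D by simp
              qed
            qed
          qed
        qed
      qed
    qed
  qed
qed

lemma ccomplete: "classicals G \<Longrightarrow> classicals D \<Longrightarrow>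
   (\<forall>v. (\<forall>a\<in>#G. ev v a) \<longrightarrow> (\<exists>b\<in>#D. ev v b)) \<Longrightarrow> gt False G D"
  using ccomplete_aux by blast

lemma decomp: "wff f \<Longrightarrow> \<not> classical f \<Longrightarrow> \<exists>c L Rr. f = fill c (IDisj L Rr) \<and> wff Rr \<and> wff L \<and>
   wff (fill c L) \<and> wff (fill c Rr)"
proof (induction f)
  case (Conj f1 f2)
  show ?case
  proof (cases "classical f1")
    case True
    then have "\<not> classical f2" using Conj by auto
    then obtain c L Rr where "f2 = fill c (IDisj L Rr) \<and> wff Rr \<and> wff L \<and> wff (fill c L) \<and> wff (fill c Rr)"
      using Conj by auto
    then show ?thesis using Conj by (intro exI[of _ "CConjR f1 c"]) auto
  next
    case False
    then obtain c L Rr where "f1 = fill c (IDisj L Rr) \<and> wff Rr \<and> wff L \<and> wff (fill c L) \<and> wff (fill c Rr)"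
      using Conj by auto
    then show ?thesis using Conj by (intro exI[of _ "CConjL c f2"]) auto
  qed
next
  case (Disj f1 f2)
  show ?case
  proof (cases "classical f1")
    case True
    then have "\<not> classical f2" using Disj by auto
    then obtain c L Rr where "f2 = fill c (IDisj L Rr) \<and> wff Rr \<and> wff L \<and> wff (fill c L) \<and> wff (fill c Rr)"
      using Disj by auto
    then show ?thesis using Disj by (intro exI[of _ "CDisjR f1 c"]) auto
  next
    case False
    then obtain c L Rr where "f1 = fill c (IDisj L Rr) \<and> wff Rr \<and> wff L \<and> wff (fill c L) \<and> wff (fill c Rr)"
      using Disj by auto
    then show ?thesis using Disj by (intro exI[of _ "CDisjL c f2"]) auto
  qed
next
  case (IDisj f1 f2)
  then show ?case by (intro exI[of _ Hole]) auto
qed auto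

lemma size_fill: "size (fill c L) < size (fill c (IDisj L Rr))" "size (fill c Rr) < size (fill c (IDisj L Rr))"
  by (induction c) auto

lemma right_one: "wff d \<Longrightarrow> b \<in> R d \<Longrightarrow> gt False G (add_mset b D) \<Longrightarrow> gt False G (add_mset d D)"
proof (induction "size d" arbitrary: d b D rule: less_induct)
  case less
  show ?case
  proof (cases "classical d")
    case True
    then show ?thesis using less.prems classical_R by auto
  next
    case False
    then obtain c L Rr where d: "d = fill c (IDisj L Rr)" "wff Rr" "wff L" "wff (fill c L)" "wff (fill c Rr)"
      using decomp less.prems(1) by blast
    then have "b \<in> R (fill c L) \<or> b \<in> R (fill c Rr)" using less.prems(2) R_fill by auto
    then show ?thesis
    proof
      assume "b \<in> R (fill c L)"
      then have "gt False G (add_mset (fill c L) D)" using less.hyps[of "fill c L"] less.prems d size_fill by auto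
      then have "gt False G ({#fill c (IDisj L Rr)#} + D)" using d by (intro gt.RIDisjL) auto
      then show ?thesis using d by simp
    next
      assume "b \<in> R (fill c Rr)"
      then have "gt False G (add_mset (fill c Rr) D)" using less.hyps[of "fill c Rr"] less.prems d size_fill by auto
      then have "gt False G ({#fill c (IDisj L Rr)#} + D)" using d by (intro gt.RIDisjR) auto
      then show ?thesis using d by simp
    qed
  qed
qed

lemma right_lift: "rs Dl B \<Longrightarrow> wffs Dl \<Longrightarrow> gt False G (B + D) \<Longrightarrow> gt False G (Dl + D)"
proof (induction Dl arbitrary: B D)
  case empty
  then show ?case by simp
next
  case (add x Dl)
  then obtain b B' where B: "B = add_mset b B'" "b \<in> R x" "rs Dl B'" by (auto simp: rs_add)
  have "gt False G (add_mset x (B' + D))" using right_one[of x b G "B' + D"] add.prems B by simp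
  then have "gt False G (B' + add_mset x D)" by simp
  then have "gt False G (Dl + add_mset x D)" using add.IH[of B' "add_mset x D"] B add.prems by simp
  then show ?case by simp
qed

lemma left_one: "wff d \<Longrightarrow> (\<forall>a\<in>R d. gt False (add_mset a G) D) \<Longrightarrow> gt False (add_mset d G) D"
proof (induction "size d" arbitrary: d rule: less_induct)
  case less
  show ?case
  proof (cases "classical d")
    case True
    then show ?thesis using less.prems classical_R by auto
  next
    case False
    then obtain c L Rr where d: "d = fill c (IDisj L Rr)" "wff Rr" "wff L" "wff (fill c L)" "wff (fill c Rr)"
      using decomp less.prems(1) by blast
    have "gt False (add_mset (fill c L) G) D" using less.hyps[of "fill c L"] less.prems d size_fill R_fill by auto
    moreover have "gt False (add_mset (fill c Rr) G) D" using less.hyps[of "fill c Rr"] less.prems d size_fill R_fill by auto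
    ultimately have "gt False (G + {#fill c (IDisj L Rr)#}) D" by (intro gt.LIDisj) auto
    then show ?thesis using d by simp
  qed
qed

lemma left_lift: "wffs Gl \<Longrightarrow> (\<forall>A. rs Gl A \<longrightarrow> gt False (A + G) D) \<Longrightarrow> gt False (Gl + G) D"
proof (induction Gl arbitrary: G)
  case empty
  then show ?case by simp
next
  case (add x Gl)
  have "\<forall>A. rs Gl A \<longrightarrow> gt False (A + add_mset x G) D"
  proof (intro allI impI)
    fix A assume A: "rs Gl A"
    have "\<forall>a\<in>R x. gt False (add_mset a (A + G)) D"
    proof
      fix a assume "a \<in> R x"
      then have "rs (add_mset x Gl) (add_mset a A)" using A by (auto simp: rs_add)
      then show "gt False (add_mset a (A + G)) D" using add.prems by auto
    qed
    then show "gt False (A + add_mset x G) D" using left_one[of x "A + G" D] add.prems by simp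
  qed
  then show ?case using add.IH[of "add_mset x G"] add.prems by simp
qed

lemma completeness: "wffs G \<Longrightarrow> wffs D \<Longrightarrow> valid G D \<Longrightarrow> gt False G D"
proof -
  assume wG: "wffs G" and wD: "wffs D" and v: "valid G D"
  have "\<forall>A. rs G A \<longrightarrow> gt False (A + {#}) D"
  proof (intro allI impI)
    fix A assume A: "rs G A"
    obtain B where B: "rs D B" "\<And>v. (\<forall>a\<in>#A. ev v a) \<Longrightarrow> (\<exists>b\<in>#B. ev v b)"
      using validD[OF v A] by blast
    have "gt False A (B + {#})" using ccomplete rs_props[OF A wG] rs_props[OF B(1) wD] B(2) by auto
    then have "gt False A (D + {#})" using right_lift[OF B(1) wD] by blast
    then show "gt False (A + {#}) D" by simp
  qed
  then show ?thesis using left_lift[OF wG] by fastforce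
qed

fun conjs :: "fm list \<Rightarrow> fm" where
  "conjs [] = Neg Bot"
| "conjs (x # xs) = Conj x (conjs xs)"

fun disjs :: "fm list \<Rightarrow> fm" where
  "disjs [] = Bot"
| "disjs (x # xs) = Disj x (disjs xs)"

fun idisjs :: "fm list \<Rightarrow> fm" where
  "idisjs [] = Bot"
| "idisjs (x # xs) = IDisj x (idisjs xs)"

lemma conjs_props: "ev v (conjs xs) = (\<forall>x\<in>set xs. ev v x)" "pvars i (conjs xs) = (\<Union>x\<in>set xs. pvars i x)"
  "classical (conjs xs) = (\<forall>x\<in>set xs. classical x)"
  by (induction xs arbitrary: i) auto

lemma disjs_props: "ev v (disjs xs) = (\<exists>x\<in>set xs. ev v x)" "pvars i (disjs xs) = (\<Union>x\<in>set xs. pvars i x)"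
  "classical (disjs xs) = (\<forall>x\<in>set xs. classical x)"
  by (induction xs arbitrary: i) auto

lemma idisjs_props: "pvars i (idisjs xs) = (\<Union>x\<in>set xs. pvars i x)"
  "wff (idisjs xs) = (\<forall>x\<in>set xs. wff x)" "R (idisjs xs) = insert Bot (\<Union>x\<in>set xs. R x)"
  by (induction xs arbitrary: i) auto

lemma ball_img: "(\<forall>x\<in>f ` A. P x) = (\<forall>x\<in>A. P (f x))" by blast

definition mt :: "nat set \<Rightarrow> nat set \<Rightarrow> nat set \<Rightarrow> fm" where
  "mt P N S = conjs (map Var (sorted_list_of_set (P \<inter> S)) @ map (\<lambda>p. Neg (Var p)) (sorted_list_of_set (N - S)))"

lemma mt_props:
  assumes "finite P" "finite N"
  shows "ev w (mt P N S) = ((\<forall>p\<in>P \<inter> S. w p) \<and> (\<forall>p\<in>N - S. \<not> w p))"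
    "pvars True (mt P N S) \<subseteq> P" "pvars False (mt P N S) \<subseteq> N" "classical (mt P N S)"
  using assms by (auto simp: mt_def conjs_props ball_Un ball_img)

lemma mt_restrict: "mt P N S = mt P N (S \<inter> (P \<union> N))"
proof -
  have "P \<inter> S = P \<inter> (S \<inter> (P \<union> N))" "N - S = N - (S \<inter> (P \<union> N))" by auto
  then show ?thesis unfolding mt_def by metis
qed

definition thD :: "nat set \<Rightarrow> nat set \<Rightarrow> ((nat \<Rightarrow> bool) \<Rightarrow> bool) \<Rightarrow> fm set" where
  "thD P N Q = {mt P N {p. v p} | v. Q v}"

definition dj :: "fm set \<Rightarrow> fm" where "dj D = disjs (SOME xs. set xs = D)"

definition th :: "nat set \<Rightarrow> nat set \<Rightarrow> ((nat \<Rightarrow> bool) \<Rightarrow> bool) \<Rightarrow> fm" where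
  "th P N Q = dj (thD P N Q)"

lemma thD_sub: "thD P N Q \<subseteq> mt P N ` Pow (P \<union> N)"
  unfolding thD_def using mt_restrict by blast

lemma thD_finite: "finite P \<Longrightarrow> finite N \<Longrightarrow> finite (thD P N Q)"
  using thD_sub by (meson finite_Pow_iff finite_UnI finite_imageI finite_subset)

lemma th_set: "finite P \<Longrightarrow> finite N \<Longrightarrow> set (SOME xs. set xs = thD P N Q) = thD P N Q"
  by (metis (mono_tags, lifting) finite_list someI_ex thD_finite)

lemma th_props:
  assumes "finite P" "finite N"
  shows "ev w (th P N Q) = (\<exists>v. Q v \<and> (\<forall>p\<in>P. v p \<longrightarrow> w p) \<and> (\<forall>p\<in>N. \<not> v p \<longrightarrow> \<not> w p))"
    "pvars True (th P N Q) \<subseteq> P" "pvars False (th P N Q) \<subseteq> N" "classical (th P N Q)"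
proof -
  have s: "set (SOME xs. set xs = thD P N Q) = thD P N Q" using th_set assms .
  show "ev w (th P N Q) = (\<exists>v. Q v \<and> (\<forall>p\<in>P. v p \<longrightarrow> w p) \<and> (\<forall>p\<in>N. \<not> v p \<longrightarrow> \<not> w p))"
    unfolding th_def dj_def disjs_props s unfolding thD_def using mt_props(1)[OF assms] by auto
  show "pvars True (th P N Q) \<subseteq> P" 
    unfolding th_def dj_def disjs_props s unfolding thD_def using mt_props(2)[OF assms] by auto
  show "pvars False (th P N Q) \<subseteq> N" 
    unfolding th_def dj_def disjs_props s unfolding thD_def using mt_props(3)[OF assms] by auto
  show "classical (th P N Q)" 
    unfolding th_def dj_def disjs_props s unfolding thD_def using mt_props(4)[OF assms] by auto
qed

lemma pvars_mem: "a \<in># A \<Longrightarrow> pvars i a \<subseteq> mpvars i A"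
  by (auto simp: mpvars_def)

lemma transfer_val:
  fixes v w :: "nat \<Rightarrow> bool"
  assumes "\<forall>p\<in>Pp \<inter> Sp. v p \<longrightarrow> w p" "\<forall>p\<in>Nn \<inter> Sn. \<not> v p \<longrightarrow> \<not> w p"
  defines "u \<equiv> (\<lambda>p. if p \<in> Sp then (if p \<in> Sn then w p else v p \<and> w p) else (if p \<in> Sn then v p \<or> w p else v p))"
  shows "\<forall>p\<in>Pp. v p \<longrightarrow> u p" "\<forall>p\<in>Nn. u p \<longrightarrow> v p" "\<forall>p\<in>Sp. u p \<longrightarrow> w p" "\<forall>p\<in>Sn. w p \<longrightarrow> u p"
  using assms by auto

lemma rs_single: "rs {#x#} {#a#} \<longleftrightarrow> a \<in> R x"
  using rs_add[of x "{#}" "{#a#}"] by auto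

lemma rs_plusI: "rs M1 N1 \<Longrightarrow> rs M2 N2 \<Longrightarrow> rs (M1 + M2) (N1 + N2)"
  using rs_plus by blast

lemma interp:
  assumes w1: "wffs G1" and w2: "wffs G2" and cL: "classicals L1" and wD: "wffs D2"
    and val: "valid (G1 + G2) (L1 + D2)"
  shows "(\<exists>\<phi>. seq_interpolant G1 G2 L1 D2 \<phi>) \<and>
         (classicals D2 \<longrightarrow> (\<exists>\<phi>. classical \<phi> \<and> seq_interpolant G1 G2 L1 D2 \<phi>))"
proof -
  define Pp where "Pp = mpvars True G1 \<union> mpvars False L1"
  define Nn where "Nn = mpvars False G1 \<union> mpvars True L1"
  define Sp where "Sp = mpvars False G2 \<union> mpvars True D2"
  define Sn where "Sn = mpvars True G2 \<union> mpvars False D2"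
  define P where "P = Pp \<inter> Sp"
  define N where "N = Nn \<inter> Sn"
  have fP: "finite P" and fN: "finite N" unfolding P_def N_def Pp_def Sp_def Nn_def Sn_def
    by (auto simp: finite_mpvars)
  define Asem where "Asem = (\<lambda>A1 v. (\<forall>a\<in>#A1. ev v a) \<and> \<not> (\<exists>l\<in>#L1. ev v l))"
  define T where "T = {th P N (Asem A1) | A1. rs G1 A1}"
  have "T \<subseteq> dj ` Pow (mt P N ` Pow (P \<union> N))"
    unfolding T_def th_def using thD_sub by blast
  then have "finite T" using fP fN by (meson finite_Pow_iff finite_UnI finite_imageI finite_subset)
  then obtain ts where ts: "set ts = T" using finite_list by blast
  have Tcl: "\<forall>t\<in>T. classical t \<and> pvars True t \<subseteq> P \<and> pvars False t \<subseteq> N"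
  proof
    fix t assume "t \<in> T"
    then obtain A1 where "t = th P N (Asem A1)" unfolding T_def by blast
    then show "classical t \<and> pvars True t \<subseteq> P \<and> pvars False t \<subseteq> N"
      using th_props(2-4)[OF fP fN] by simp
  qed
  have rL: "rs L1 L1" using rs_classicals[OF cL] by simp
  have K1: "\<forall>v. (\<forall>a\<in>#A1. ev v a) \<longrightarrow> (\<exists>l\<in>#L1. ev v l) \<or> ev v (th P N (Asem A1))" for A1
    unfolding th_props(1)[OF fP fN] Asem_def by blast
  have K2: "\<exists>B. rs D2 B \<and> (\<forall>w. ev w t \<and> (\<forall>a\<in>#A2. ev w a) \<longrightarrow> (\<exists>b\<in>#B. ev w b))"
    if t: "t \<in> T" and A2: "rs G2 A2" for t A2
  proof -
    obtain A1 where A1: "rs G1 A1" "t = th P N (Asem A1)" using t T_def by blast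
    have "rs (G1 + G2) (A1 + A2)" using A1(1) A2 by (rule rs_plusI)
    then obtain B0 where B0: "rs (L1 + D2) B0" "\<And>v. (\<forall>a\<in>#A1 + A2. ev v a) \<Longrightarrow> (\<exists>b\<in>#B0. ev v b)"
      using validD[OF val] by blast
    then obtain N1 B where B: "B0 = N1 + B" "rs L1 N1" "rs D2 B" unfolding rs_plus by blast
    then have B: "B0 = L1 + B" "rs D2 B" using rs_classicals[OF cL] by auto
    have "\<forall>w. ev w t \<and> (\<forall>a\<in>#A2. ev w a) \<longrightarrow> (\<exists>b\<in>#B. ev w b)"
    proof (intro allI impI)
      fix w assume wt: "ev w t \<and> (\<forall>a\<in>#A2. ev w a)"
      then obtain v where v: "Asem A1 v" "\<forall>p\<in>P. v p \<longrightarrow> w p" "\<forall>p\<in>N. \<not> v p \<longrightarrow> \<not> w p"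
        using A1 th_props(1)[OF fP fN] by auto
      define u where "u \<equiv> (\<lambda>p. if p \<in> Sp then (if p \<in> Sn then w p else v p \<and> w p) else (if p \<in> Sn then v p \<or> w p else v p))"
      have tr: "\<forall>p\<in>Pp. v p \<longrightarrow> u p" "\<forall>p\<in>Nn. u p \<longrightarrow> v p" "\<forall>p\<in>Sp. u p \<longrightarrow> w p" "\<forall>p\<in>Sn. w p \<longrightarrow> u p"
        using transfer_val[of Pp Sp v w Nn Sn] v unfolding u_def P_def N_def by blast+
      have mA1: "mpvars i A1 \<subseteq> mpvars i G1" for i using rs_props[OF A1(1) w1] by blast
      have mA2: "mpvars i A2 \<subseteq> mpvars i G2" for i using rs_props[OF A2 w2] by blast
      have mB: "mpvars i B \<subseteq> mpvars i D2" for i using rs_props[OF B(2) wD] by blast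
      have u1: "\<forall>a\<in>#A1. ev u a"
      proof
        fix a assume a: "a \<in># A1"
        have "pvars True a \<subseteq> Pp" "pvars False a \<subseteq> Nn"
          using pvars_mem[OF a] mA1 unfolding Pp_def Nn_def by blast+
        then show "ev u a" using ev_mono[of a v u] tr v(1) a unfolding Asem_def by blast
      qed
      have u2: "\<not> (\<exists>l\<in>#L1. ev u l)"
      proof
        assume "\<exists>l\<in>#L1. ev u l"
        then obtain l where l: "l \<in># L1" "ev u l" by blast
        have "pvars True l \<subseteq> Nn" "pvars False l \<subseteq> Pp"
          using pvars_mem[OF l(1)] unfolding Pp_def Nn_def by blast+
        then have "ev v l" using ev_mono[of l u v] tr l by blast
        then show False using v(1) l unfolding Asem_def by blast
      qed
      have u3: "\<forall>a\<in>#A2. ev u a"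
      proof
        fix a assume a: "a \<in># A2"
        have "pvars True a \<subseteq> Sn" "pvars False a \<subseteq> Sp"
          using pvars_mem[OF a] mA2 unfolding Sp_def Sn_def by blast+
        then show "ev u a" using ev_mono[of a w u] tr wt a by blast
      qed
      have "\<forall>a\<in>#A1 + A2. ev u a" using u1 u3 by auto
      then obtain b where b: "b \<in># L1 + B" "ev u b" using B0(2) B(1) by blast
      then have b': "b \<in># B" using u2 by auto
      have "pvars True b \<subseteq> Sp" "pvars False b \<subseteq> Sn"
        using pvars_mem[OF b'] mB unfolding Sp_def Sn_def by blast+
      then have "ev w b" using ev_mono[of b u w] tr b by blast
      then show "\<exists>b\<in>#B. ev w b" using b' by blast
    qed
    then show ?thesis using B by blast
  qed
  have K2c: "B = D2" if "classicals D2" "rs D2 B" for B using rs_classicals that by blast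
  have wG1: "wffs G1" and wG2: "wffs G2" using w1 w2 .
  have varsok: "pvars i \<phi> \<subseteq> (mpvars i G1 \<union> mpvars (\<not> i) L1) \<inter> (mpvars (\<not> i) G2 \<union> mpvars i D2)"
    if "pvars True \<phi> \<subseteq> P" "pvars False \<phi> \<subseteq> N" for \<phi> i
    using that unfolding P_def N_def Pp_def Nn_def Sp_def Sn_def by (cases i) auto
  define \<phi> where "\<phi> = idisjs ts"
  have wphi: "wff \<phi>" unfolding \<phi>_def idisjs_props ts using Tcl classical_wff by blast
  have Rphi: "R \<phi> = insert Bot T" unfolding \<phi>_def idisjs_props ts using Tcl classical_R by auto
  have v1: "valid G1 (L1 + {#\<phi>#})"
  proof (rule validI)
    fix A1 assume A1: "rs G1 A1"
    have "th P N (Asem A1) \<in> T" using A1 T_def by blast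
    then have "rs (L1 + {#\<phi>#}) (L1 + {#th P N (Asem A1)#})" using rL Rphi by (intro rs_plusI) (auto simp: rs_single)
    then show "\<exists>B. rs (L1 + {#\<phi>#}) B \<and> (\<forall>v. (\<forall>a\<in>#A1. ev v a) \<longrightarrow> (\<exists>b\<in>#B. ev v b))"
      using K1[of A1] by fastforce
  qed
  have v2: "valid (G2 + {#\<phi>#}) D2"
  proof (rule validI)
    fix A assume "rs (G2 + {#\<phi>#}) A"
    then obtain r A2 where A: "A = add_mset r A2" "r \<in> R \<phi>" "rs G2 A2" by (auto simp: rs_add)
    show "\<exists>B. rs D2 B \<and> (\<forall>v. (\<forall>a\<in>#A. ev v a) \<longrightarrow> (\<exists>b\<in>#B. ev v b))"
    proof (cases "r = Bot")
      case True
      obtain B where "rs D2 B" using rs_ex by blast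
      then show ?thesis using A True by auto
    next
      case False
      then have "r \<in> T" using A Rphi by auto
      then show ?thesis using K2[OF _ A(3)] A by auto
    qed
  qed
  have "seq_interpolant G1 G2 L1 D2 \<phi>"
    unfolding seq_interpolant_def
  proof (intro conjI allI)
    show "wff \<phi>" by fact
    show "gt False G1 (L1 + {#\<phi>#})" using completeness[OF w1 _ v1] wphi classicals_wffs[OF cL] by simp
    show "gt False (G2 + {#\<phi>#}) D2" using completeness[OF _ wD v2] wphi w2 by simp
    fix i
    have "pvars True \<phi> \<subseteq> P" "pvars False \<phi> \<subseteq> N" unfolding \<phi>_def idisjs_props ts using Tcl by auto
    then show "pvars i \<phi> \<subseteq> (mpvars i G1 \<union> mpvars (\<not> i) L1) \<inter> (mpvars (\<not> i) G2 \<union> mpvars i D2)"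
      using varsok by blast
  qed
  moreover have "\<exists>\<phi>. classical \<phi> \<and> seq_interpolant G1 G2 L1 D2 \<phi>" if cD: "classicals D2"
  proof -
    define \<psi> where "\<psi> = disjs ts"
    have cpsi: "classical \<psi>" unfolding \<psi>_def disjs_props ts using Tcl by blast
    have Rpsi: "R \<psi> = {\<psi>}" using classical_R[OF cpsi] .
    have evpsi: "ev w \<psi> = (\<exists>t\<in>T. ev w t)" for w unfolding \<psi>_def disjs_props ts ..
    have v1: "valid G1 (L1 + {#\<psi>#})"
    proof (rule validI)
      fix A1 assume A1: "rs G1 A1"
      have tm: "th P N (Asem A1) \<in> T" using A1 T_def by blast
      have "rs (L1 + {#\<psi>#}) (L1 + {#\<psi>#})" using rL Rpsi by (intro rs_plusI) (auto simp: rs_single)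
      moreover have "\<forall>v. (\<forall>a\<in>#A1. ev v a) \<longrightarrow> (\<exists>b\<in>#L1 + {#\<psi>#}. ev v b)"
      proof (intro allI impI)
        fix v assume "\<forall>a\<in>#A1. ev v a"
        then have "(\<exists>l\<in>#L1. ev v l) \<or> ev v (th P N (Asem A1))" using K1[of A1] by blast
        then have "(\<exists>l\<in>#L1. ev v l) \<or> ev v \<psi>" using evpsi tm by blast
        then show "\<exists>b\<in>#L1 + {#\<psi>#}. ev v b" by auto
      qed
      ultimately show "\<exists>B. rs (L1 + {#\<psi>#}) B \<and> (\<forall>v. (\<forall>a\<in>#A1. ev v a) \<longrightarrow> (\<exists>b\<in>#B. ev v b))"
        by blast
    qed
    have v2: "valid (G2 + {#\<psi>#}) D2"
    proof (rule validI)
      fix A assume "rs (G2 + {#\<psi>#}) A"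
      then obtain A2 where A: "A = add_mset \<psi> A2" "rs G2 A2" using Rpsi by (auto simp: rs_add)
      have "rs D2 D2" using rs_classicals[OF cD] by simp
      moreover have "\<forall>w. (\<forall>a\<in>#A. ev w a) \<longrightarrow> (\<exists>b\<in>#D2. ev w b)"
      proof (intro allI impI)
        fix w assume "\<forall>a\<in>#A. ev w a"
        then obtain t where t: "t \<in> T" "ev w t" "\<forall>a\<in>#A2. ev w a" using A evpsi by auto
        obtain B where "rs D2 B" "\<forall>w. ev w t \<and> (\<forall>a\<in>#A2. ev w a) \<longrightarrow> (\<exists>b\<in>#B. ev w b)"
          using K2[OF t(1) A(2)] by blast
        then show "\<exists>b\<in>#D2. ev w b" using K2c[OF cD] t by blast
      qed
      ultimately show "\<exists>B. rs D2 B \<and> (\<forall>v. (\<forall>a\<in>#A. ev v a) \<longrightarrow> (\<exists>b\<in>#B. ev v b))" by blast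
    qed
    have "seq_interpolant G1 G2 L1 D2 \<psi>"
      unfolding seq_interpolant_def
    proof (intro conjI allI)
      show "wff \<psi>" using classical_wff[OF cpsi] .
      show "gt False G1 (L1 + {#\<psi>#})" using completeness[OF w1 _ v1] cpsi classical_wff classicals_wffs[OF cL] by simp
      show "gt False (G2 + {#\<psi>#}) D2" using completeness[OF _ wD v2] cpsi classical_wff w2 by simp
      fix i
      have "pvars True \<psi> \<subseteq> P" "pvars False \<psi> \<subseteq> N" unfolding \<psi>_def disjs_props ts using Tcl by auto
      then show "pvars i \<psi> \<subseteq> (mpvars i G1 \<union> mpvars (\<not> i) L1) \<inter> (mpvars (\<not> i) G2 \<union> mpvars i D2)"
        using varsok by blast
    qed
    then show ?thesis using cpsi by blast
  qed
  ultimately show ?thesis by blast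
qed

theorem theorem8p1:
  assumes "wffs \<Gamma>" and "wffs \<Delta>" and "GT \<Gamma> \<Delta>"
  shows "\<forall>\<Gamma>1 \<Gamma>2 \<Lambda>1 \<Delta>2. \<Gamma> = \<Gamma>1 + \<Gamma>2 \<longrightarrow> \<Delta> = \<Lambda>1 + \<Delta>2 \<longrightarrow> classicals \<Lambda>1 \<longrightarrow>
           (\<exists>\<phi>. seq_interpolant \<Gamma>1 \<Gamma>2 \<Lambda>1 \<Delta>2 \<phi>) \<and>
           (classicals \<Delta>2 \<longrightarrow> (\<exists>\<phi>. classical \<phi> \<and> seq_interpolant \<Gamma>1 \<Gamma>2 \<Lambda>1 \<Delta>2 \<phi>))"
proof (intro allI impI)
  fix \<Gamma>1 \<Gamma>2 \<Lambda>1 \<Delta>2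
  assume G: "\<Gamma> = \<Gamma>1 + \<Gamma>2" and D: "\<Delta> = \<Lambda>1 + \<Delta>2" and cL: "classicals \<Lambda>1"
  have "valid \<Gamma> \<Delta>" using soundness[OF assms(3)] .
  then show "(\<exists>\<phi>. seq_interpolant \<Gamma>1 \<Gamma>2 \<Lambda>1 \<Delta>2 \<phi>) \<and>
           (classicals \<Delta>2 \<longrightarrow> (\<exists>\<phi>. classical \<phi> \<and> seq_interpolant \<Gamma>1 \<Gamma>2 \<Lambda>1 \<Delta>2 \<phi>))"
    using interp[of \<Gamma>1 \<Gamma>2 \<Lambda>1 \<Delta>2] assms(1,2) G D cL by auto
qed

end
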